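(* Let $\mathcal A: f=0$ be an arrangement of $d$ lines in $\mathbb P^2$ and let $m$ be the multiplicity of one of its intersection points. Then either $mdr(f)=d-m$, or $mdr(f)\le d-m-1$ and one of the following two cases occurs: (1) $mdr(f)\le m-1$; then in fact $mdr(f)=m-1$, one has $2m<d+1$, and $\mathcal A$ is free with exponents $d_1=mdr(f)=m-1$ and $d_2=d-m$; (2) $m\le mdr(f)\le d-m-1$, in particular $2m<d$.
   Context: A line arrangement $\mathcal A: f=0$ is a finite set of distinct lines, $f\in\mathbb C[x,y,z]$ the product of their linear forms, $d=\deg f$ the number of lines. The multiplicity of an intersection point is the number of lines of $\mathcal A$ through it. $mdr(f)$ is the smallest integer $r\ge 0$ such that there exist homogeneous $a,b,c$ of degree $r$, not all zero, with $af_x+bf_y+cf_z=0$. The curve is free if the module $AR(f)=\{(a,b,c)\in S^3: af_x+bf_y+cf_z=0\}$ is a free $S$-module (of rank 2) generated by homogeneous syzygies of degrees $d_1\le d_2$, called the exponents. *)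

theory Defs
  imports Complex_Main "HOL-Library.Poly_Mapping" "HOL-Library.Product_Plus"
begin

text \<open>Polynomials in S = C[x,y,z]: finitely supported maps from exponent triples
 (i,j,k) (standing for x^i y^j z^k) to coefficients; multiplication is convolution.\<close>
type_synonym poly3 = "(nat \<times> nat \<times> nat) \<Rightarrow>\<^sub>0 complex"

definition linform :: "complex \<times> complex \<times> complex \<Rightarrow> poly3" where
  "linform v = (case v of (a, b, c) \<Rightarrow>
     Poly_Mapping.single (1,0,0) a + Poly_Mapping.single (0,1,0) b + Poly_Mapping.single (0,0,1) c)"

definition dx :: "poly3 \<Rightarrow> poly3" where
  "dx p = (\<Sum>t\<in>Poly_Mapping.keys p. case t of (i,j,k) \<Rightarrow> Poly_Mapping.single (i - 1, j, k) (of_nat i * Poly_Mapping.lookup p t))"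
definition dy :: "poly3 \<Rightarrow> poly3" where
  "dy p = (\<Sum>t\<in>Poly_Mapping.keys p. case t of (i,j,k) \<Rightarrow> Poly_Mapping.single (i, j - 1, k) (of_nat j * Poly_Mapping.lookup p t))"
definition dz :: "poly3 \<Rightarrow> poly3" where
  "dz p = (\<Sum>t\<in>Poly_Mapping.keys p. case t of (i,j,k) \<Rightarrow> Poly_Mapping.single (i, j, k - 1) (of_nat k * Poly_Mapping.lookup p t))"

text \<open>homogeneous of degree r (the zero polynomial is homogeneous of every degree)\<close>
definition homog :: "nat \<Rightarrow> poly3 \<Rightarrow> bool" where
  "homog r p \<longleftrightarrow> (\<forall>(i,j,k)\<in>Poly_Mapping.keys p. i + j + k = r)"

definition AR :: "poly3 \<Rightarrow> (poly3 \<times> poly3 \<times> poly3) set" where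
  "AR f = {(a,b,c). a * dx f + b * dy f + c * dz f = 0}"

definition homog_syz :: "poly3 \<Rightarrow> nat \<Rightarrow> poly3 \<times> poly3 \<times> poly3 \<Rightarrow> bool" where
  "homog_syz f r s \<longleftrightarrow> s \<in> AR f \<and> (case s of (a,b,c) \<Rightarrow> homog r a \<and> homog r b \<and> homog r c)"

definition mdr :: "poly3 \<Rightarrow> nat" where
  "mdr f = (LEAST r. \<exists>s. homog_syz f r s \<and> s \<noteq> (0,0,0))"

definition smul3 :: "poly3 \<Rightarrow> poly3 \<times> poly3 \<times> poly3 \<Rightarrow> poly3 \<times> poly3 \<times> poly3" where
  "smul3 g s = (case s of (a,b,c) \<Rightarrow> (g * a, g * b, g * c))"

definition add3 :: "poly3 \<times> poly3 \<times> poly3 \<Rightarrow> poly3 \<times> poly3 \<times> poly3 \<Rightarrow> poly3 \<times> poly3 \<times> poly3" where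
  "add3 s t = (case s of (a,b,c) \<Rightarrow> case t of (a',b',c') \<Rightarrow> (a + a', b + b', c + c'))"

definition free_with_exponents :: "poly3 \<Rightarrow> nat \<Rightarrow> nat \<Rightarrow> bool" where
  "free_with_exponents f d1 d2 \<longleftrightarrow> d1 \<le> d2 \<and>
     (\<exists>r1 r2. homog_syz f d1 r1 \<and> homog_syz f d2 r2 \<and>
        (\<forall>s\<in>AR f. \<exists>g1 g2. s = add3 (smul3 g1 r1) (smul3 g2 r2)) \<and>
        (\<forall>g1 g2. add3 (smul3 g1 r1) (smul3 g2 r2) = (0,0,0) \<longrightarrow> g1 = 0 \<and> g2 = 0))"

definition proportional :: "complex \<times> complex \<times> complex \<Rightarrow> complex \<times> complex \<times> complex \<Rightarrow> bool" where
  "proportional u v \<longleftrightarrow> (\<exists>t::complex. t \<noteq> 0 \<and> v = (case u of (a,b,c) \<Rightarrow> (t*a, t*b, t*c)))"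

definition line_arrangement :: "(complex \<times> complex \<times> complex) list \<Rightarrow> bool" where
  "line_arrangement L \<longleftrightarrow> (\<forall>v\<in>set L. v \<noteq> (0,0,0)) \<and>
     (\<forall>i<length L. \<forall>j<length L. i \<noteq> j \<longrightarrow> \<not> proportional (L!i) (L!j))"

definition arr_poly :: "(complex \<times> complex \<times> complex) list \<Rightarrow> poly3" where
  "arr_poly L = prod_list (map linform L)"

definition on_line :: "complex \<times> complex \<times> complex \<Rightarrow> complex \<times> complex \<times> complex \<Rightarrow> bool" where
  "on_line p v \<longleftrightarrow> (case p of (x,y,z) \<Rightarrow> case v of (a,b,c) \<Rightarrow> a*x + b*y + c*z = 0)"

definition mult_pt :: "(complex \<times> complex \<times> complex) list \<Rightarrow> complex \<times> complex \<times> complex \<Rightarrow> nat" where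
  "mult_pt L p = card {i. i < length L \<and> on_line p (L!i)}"

definition intersection_point :: "(complex \<times> complex \<times> complex) list \<Rightarrow> complex \<times> complex \<times> complex \<Rightarrow> bool" where
  "intersection_point L p \<longleftrightarrow> p \<noteq> (0,0,0) \<and> mult_pt L p \<ge> 2"

end

theory Submission
  imports Defs "HOL-Library.Product_Lexorder" "HOL-Computational_Algebra.Polynomial_Factorial" "HOL-Computational_Algebra.Field_as_Ring"
begin

instance prod :: ("{ordered_cancel_comm_monoid_add,linorder}", "{ordered_cancel_comm_monoid_add,linorder}") ordered_cancel_comm_monoid_add
  by intro_classes (auto simp: less_eq_prod_def add_strict_left_mono add_left_mono split: prod.splits)

type_synonym R = "complex poly poly poly"

definition SUMK :: "(nat\<times>nat\<times>nat \<Rightarrow> complex \<Rightarrow> 'b::ab_group_add) \<Rightarrow> poly3 \<Rightarrow> 'b" where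
  "SUMK G p = (\<Sum>t\<in>Poly_Mapping.keys p. G t (Poly_Mapping.lookup p t))"

lemma SUMK_superset:
  assumes "finite S" "Poly_Mapping.keys p \<subseteq> S" "\<And>t. G t 0 = 0"
  shows "SUMK G p = (\<Sum>t\<in>S. G t (Poly_Mapping.lookup p t))"
  unfolding SUMK_def by (rule sum.mono_neutral_left) (auto simp: assms in_keys_iff)

lemma SUMK_add:
  assumes "\<And>t a b. G t (a+b) = G t a + G t b"
  shows "SUMK G (p+q) = SUMK G p + SUMK G q"
proof -
  have G0: "\<And>t. G t 0 = 0" using assms[of _ 0 0] by simp
  let ?S = "Poly_Mapping.keys p \<union> Poly_Mapping.keys q"
  have "SUMK G (p+q) = (\<Sum>t\<in>?S. G t (Poly_Mapping.lookup (p+q) t))"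
    by (rule SUMK_superset) (insert keys_add[of p q], auto simp: G0)
  also have "\<dots> = (\<Sum>t\<in>?S. G t (Poly_Mapping.lookup p t)) + (\<Sum>t\<in>?S. G t (Poly_Mapping.lookup q t))"
    by (simp add: lookup_add assms sum.distrib)
  also have "\<dots> = SUMK G p + SUMK G q"
    using SUMK_superset[of ?S p G] SUMK_superset[of ?S q G] by (auto simp: G0)
  finally show ?thesis .
qed

lemma SUMK_single:
  assumes "\<And>t. G t 0 = 0"
  shows "SUMK G (Poly_Mapping.single t a) = G t a"
  using assms by (cases "a = 0") (auto simp: SUMK_def)

lemma pm_expand: "p = (\<Sum>t\<in>Poly_Mapping.keys p. Poly_Mapping.single t (Poly_Mapping.lookup p t))"
  by (rule poly_mapping_eqI) (auto simp: lookup_sum lookup_single when_def in_keys_iff)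

lemma additive_sum:
  fixes F :: "poly3 \<Rightarrow> 'b::ab_group_add"
  assumes "\<And>p q. F (p+q) = F p + F q"
  shows "F (sum f S) = (\<Sum>x\<in>S. F (f x))"
proof -
  have F0: "F 0 = 0" using assms[of 0 0] by simp
  show ?thesis
  proof (cases "finite S")
    case True thus ?thesis by induction (auto simp: F0 assms)
  qed (simp add: F0)
qed

lemma lin_ext:
  fixes F :: "poly3 \<Rightarrow> 'b::ab_group_add"
  assumes "\<And>p q. F (p+q) = F p + F q"
  shows "F p = SUMK (\<lambda>t a. F (Poly_Mapping.single t a)) p"
proof -
  have "F p = F (\<Sum>t\<in>Poly_Mapping.keys p. Poly_Mapping.single t (Poly_Mapping.lookup p t))"
    by (subst pm_expand) simp
  also have "\<dots> = SUMK (\<lambda>t a. F (Poly_Mapping.single t a)) p"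
    unfolding SUMK_def by (rule additive_sum[OF assms])
  finally show ?thesis .
qed

lemma lin_eq:
  fixes F G :: "poly3 \<Rightarrow> 'b::ab_group_add"
  assumes "\<And>p q. F (p+q) = F p + F q" "\<And>p q. G (p+q) = G p + G q"
    and "\<And>t a. F (Poly_Mapping.single t a) = G (Poly_Mapping.single t a)"
  shows "F p = G p"
proof -
  have "F p = SUMK (\<lambda>t a. F (Poly_Mapping.single t a)) p" by (rule lin_ext[OF assms(1)])
  also have "\<dots> = SUMK (\<lambda>t a. G (Poly_Mapping.single t a)) p" by (simp add: assms(3))
  also have "\<dots> = G p" by (rule lin_ext[OF assms(2), symmetric])
  finally show ?thesis .
qed

lemma bilin_eq:
  fixes F G :: "poly3 \<Rightarrow> poly3 \<Rightarrow> 'b::ab_group_add"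
  assumes "\<And>p q r. F (p+q) r = F p r + F q r" "\<And>p q r. F r (p+q) = F r p + F r q"
    and "\<And>p q r. G (p+q) r = G p r + G q r" "\<And>p q r. G r (p+q) = G r p + G r q"
    and "\<And>s a t b. F (Poly_Mapping.single s a) (Poly_Mapping.single t b) = G (Poly_Mapping.single s a) (Poly_Mapping.single t b)"
  shows "F p q = G p q"
proof -
  have *: "F (Poly_Mapping.single s a) q = G (Poly_Mapping.single s a) q" for s a
    by (rule lin_eq[where F="\<lambda>q. F (Poly_Mapping.single s a) q" and G="\<lambda>q. G (Poly_Mapping.single s a) q"])
       (rule assms(2), rule assms(4), rule assms(5))
  show ?thesis
    by (rule lin_eq[where F="\<lambda>p. F p q" and G="\<lambda>p. G p q"]) (rule assms(1), rule assms(3), rule *)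
qed

definition mon :: "nat\<times>nat\<times>nat \<Rightarrow> complex \<Rightarrow> R" where
  "mon t a = (case t of (i,j,k) \<Rightarrow> monom (monom (monom a i) j) k)"

definition phi :: "poly3 \<Rightarrow> R" where "phi = SUMK mon"

lemma mon_add: "mon t (a+b) = mon t a + mon t b"
  by (cases t) (auto simp: mon_def add_monom)

lemma mon_0[simp]: "mon t 0 = 0"
  by (cases t) (auto simp: mon_def)

lemma phi_add: "phi (p+q) = phi p + phi q"
  unfolding phi_def by (rule SUMK_add) (rule mon_add)

lemma phi_single[simp]: "phi (Poly_Mapping.single t a) = mon t a"
  unfolding phi_def by (rule SUMK_single) simp

lemma phi_0[simp]: "phi 0 = 0"
  using phi_add[of 0 0] by simp

lemma phi_uminus: "phi (-p) = - phi p"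
  using phi_add[of p "-p"] by (simp add: eq_neg_iff_add_eq_0 add.commute)

lemma phi_diff: "phi (p - q) = phi p - phi q"
  using phi_add[of p "-q"] phi_uminus[of q] by simp

lemma mon_mult: "mon (s+t) (a*b) = mon s a * mon t b"
  by (cases s; cases t) (auto simp: mon_def add_Pair mult_monom)

lemma phi_mult: "phi (p*q) = phi p * phi q"
  by (rule bilin_eq[where F="\<lambda>p q. phi (p*q)" and G="\<lambda>p q. phi p * phi q"])
     (auto simp: phi_add distrib_left distrib_right mult_single mon_mult)

lemma phi_one[simp]: "phi 1 = 1"
proof -
  have "(1::poly3) = Poly_Mapping.single (0,0,0) 1" by (simp add: zero_prod_def[symmetric])
  then have "phi 1 = mon (0,0,0) 1" by (metis phi_single)
  then show ?thesis by (simp add: mon_def)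
qed

lemma phi_coeff: "coeff (coeff (coeff (phi p) k) j) i = Poly_Mapping.lookup p (i,j,k)"
  by (rule lin_eq[where F="\<lambda>p. coeff (coeff (coeff (phi p) k) j) i" and G="\<lambda>p. Poly_Mapping.lookup p (i,j,k)"])
     (auto simp: phi_add lookup_add lookup_single when_def mon_def coeff_monom split: prod.splits)

lemma phi_inj: "phi p = phi q \<Longrightarrow> p = q"
proof -
  assume "phi p = phi q"
  then have "\<And>i j k. Poly_Mapping.lookup p (i,j,k) = Poly_Mapping.lookup q (i,j,k)"
    by (metis phi_coeff)
  then show "p = q" by (intro poly_mapping_eqI) auto
qed

lemma phi_surj: "\<exists>p. phi p = q"
proof -
  let ?I = "range phi"
  have add: "a \<in> ?I \<Longrightarrow> b \<in> ?I \<Longrightarrow> a + b \<in> ?I" for a b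
    by (auto simp: phi_add[symmetric])
  have mul: "a \<in> ?I \<Longrightarrow> b \<in> ?I \<Longrightarrow> a * b \<in> ?I" for a b
    by (auto simp: phi_mult[symmetric])
  have pc: "pCons c a = [:c:] + [:0,1:] * a" for c and a :: "'a::comm_ring_1 poly"
    by simp
  have X: "[:[:[:0,1:]:]:] \<in> ?I"
  proof -
    have "phi (Poly_Mapping.single (1,0,0) 1) = [:[:[:0,1:]:]:]" by (simp add: mon_def monom_Suc monom_0 one_pCons)
    then show ?thesis by (metis rangeI)
  qed
  have Y: "[:[:0,1:]:] \<in> ?I"
  proof -
    have "phi (Poly_Mapping.single (0,1,0) 1) = [:[:0,1:]:]" by (simp add: mon_def monom_Suc monom_0 one_pCons)
    then show ?thesis by (metis rangeI)
  qed
  have Z: "[:0,1:] \<in> ?I"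
  proof -
    have "phi (Poly_Mapping.single (0,0,1) 1) = [:0,1:]" by (simp add: mon_def monom_Suc monom_0 one_pCons)
    then show ?thesis by (metis rangeI)
  qed
  have C: "[:[:[:c:]:]:] \<in> ?I" for c
  proof -
    have "phi (Poly_Mapping.single (0,0,0) c) = [:[:[:c:]:]:]" by (simp add: mon_def monom_0)
    then show ?thesis by (metis rangeI)
  qed
  have L1: "[:[:a:]:] \<in> ?I" for a
  proof (induction a)
    case 0 then show ?case using C[of 0] by simp
  next
    case (pCons c a)
    have e: "pCons c a = [:c:] + [:0,1:] * a" by (rule pc)
    have eq: "[:[:pCons c a:]:] = [:[:[:c:]:]:] + [:[:[:0,1:]:]:] * [:[:a:]:]"
      apply (simp only: e) by simp
    show ?case unfolding eq by (intro add mul C X pCons.IH)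
  qed
  have L2: "[:a:] \<in> ?I" for a
  proof (induction a)
    case 0 then show ?case using C[of 0] by simp
  next
    case (pCons c a)
    have e: "pCons c a = [:c:] + [:0,1:] * a" by (rule pc)
    have eq: "[:pCons c a:] = [:[:c:]:] + [:[:0,1:]:] * [:a:]"
      apply (simp only: e) by simp
    show ?case unfolding eq by (intro add mul L1 Y pCons.IH)
  qed
  have L3: "a \<in> ?I" for a
  proof (induction a)
    case 0 then show ?case using C[of 0] by simp
  next
    case (pCons c a)
    have eq: "pCons c a = [:c:] + [:0,1:] * a"
      by (rule pc)
    show ?case unfolding eq by (intro add mul L2 Z pCons.IH)
  qed
  show ?thesis using L3[of q] by auto
qed

lemma phi_eq_iff: "phi p = phi q \<longleftrightarrow> p = q"
  using phi_inj by blast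

lemma phi_dvd_iff: "phi a dvd phi b \<longleftrightarrow> a dvd b"
proof
  assume "phi a dvd phi b"
  then obtain r where "phi b = phi a * r" unfolding dvd_def by blast
  moreover obtain s where "phi s = r" using phi_surj by blast
  ultimately have "phi b = phi (a*s)" by (simp add: phi_mult)
  then have "b = a * s" by (rule phi_inj)
  then show "a dvd b" by (rule dvdI)
next
  assume "a dvd b"
  then obtain k where "b = a * k" unfolding dvd_def by blast
  then have "phi b = phi a * phi k" by (simp add: phi_mult)
  then show "phi a dvd phi b" by (rule dvdI)
qed

lemma unit_complex: "(c::complex) \<noteq> 0 \<Longrightarrow> is_unit c"
  by (simp add: dvd_field_iff)

lemma irr_lin:
  fixes u :: "'a::{idom_divide,algebraic_semidom}"
  assumes "is_unit u"
  shows "irreducible (pCons a [:u:])"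
proof -
  have u0: "u \<noteq> 0" using assms by auto
  let ?x = "pCons a [:u:]"
  have dx: "degree ?x = 1" using u0 by simp
  have lx: "lead_coeff ?x = u" using u0 by simp
  show ?thesis
  proof (rule irreducibleI)
    show "?x \<noteq> 0" using u0 by simp
    show "\<not> is_unit ?x" using dx by (auto simp: is_unit_poly_iff)
  next
    fix b c assume bc: "?x = b * c"
    then have b0: "b \<noteq> 0" and c0: "c \<noteq> 0" using u0 by auto
    have "degree (b*c) = degree b + degree c" using b0 c0 by (rule degree_mult_eq)
    then have deg: "degree b + degree c = 1" using bc dx by simp
    have "lead_coeff (b*c) = lead_coeff b * lead_coeff c" by (rule lead_coeff_mult)
    then have lc: "u = lead_coeff b * lead_coeff c" using bc lx by simp
    show "is_unit b \<or> is_unit c"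
    proof (cases "degree b = 0")
      case True
      then have e: "b = [:lead_coeff b:]" using degree_0_id[of b] by simp
      have "lead_coeff b dvd u" using lc by simp
      then have "is_unit (lead_coeff b)" using assms by (rule dvd_unit_imp_unit)
      then have "is_unit [:lead_coeff b:]" by (simp add: is_unit_const_poly_iff)
      then show ?thesis using e by simp
    next
      case False
      then have "degree c = 0" using deg by simp
      then have e: "c = [:lead_coeff c:]" using degree_0_id[of c] by simp
      have "lead_coeff c dvd u" using lc by simp
      then have "is_unit (lead_coeff c)" using assms by (rule dvd_unit_imp_unit)
      then have "is_unit [:lead_coeff c:]" by (simp add: is_unit_const_poly_iff)
      then show ?thesis using e by simp
    qed
  qed
qed

lemma phi_linform: "phi (linform (a,b,c)) = pCons (pCons (pCons 0 [:a:]) [:[:b:]:]) [:[:[:c:]:]:]"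
  by (simp add: linform_def phi_add mon_def monom_Suc monom_0)

lemma prime_linform:
  assumes "v \<noteq> (0,0,0)"
  shows "prime_elem (phi (linform v))"
proof -
  obtain a b c where v: "v = (a,b,c)" by (cases v) auto
  show ?thesis
  proof (cases "c = 0")
    case False
    have "is_unit [:[:c:]:]" using False by (simp add: is_unit_const_poly_iff unit_complex)
    then have "irreducible (phi (linform v))" unfolding v phi_linform by (rule irr_lin)
    then show ?thesis by (simp add: prime_elem_iff_irreducible)
  next
    case c: True
    show ?thesis
    proof (cases "b = 0")
      case False
      have "is_unit [:b:]" using False by (simp add: is_unit_const_poly_iff unit_complex)
      then have "irreducible (pCons (pCons 0 [:a:]) [:[:b:]:])" by (rule irr_lin)
      then have "prime_elem (pCons (pCons 0 [:a:]) [:[:b:]:])" by (simp add: prime_elem_iff_irreducible)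
      then have "prime_elem [:pCons (pCons 0 [:a:]) [:[:b:]:]:]" by (simp add: prime_elem_const_poly_iff)
      then show ?thesis unfolding v phi_linform using c by simp
    next
      case b: True
      then have a: "a \<noteq> 0" using assms v c by auto
      have "is_unit a" using a by (rule unit_complex)
      then have "irreducible (pCons 0 [:a:])" by (rule irr_lin)
      then have "prime_elem (pCons 0 [:a:])" by (simp add: prime_elem_iff_irreducible)
      then have "prime_elem [:[:pCons 0 [:a:]:]:]" by (simp add: prime_elem_const_poly_iff)
      then show ?thesis unfolding v phi_linform using b c by simp
    qed
  qed
qed

lemma linform_dvd_mult:
  assumes "v \<noteq> (0,0,0)" "linform v dvd a * b"
  shows "linform v dvd a \<or> linform v dvd b"
proof -
  have "phi (linform v) dvd phi a * phi b" using assms(2) by (simp add: phi_dvd_iff[symmetric] phi_mult)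
  then have "phi (linform v) dvd phi a \<or> phi (linform v) dvd phi b"
    using prime_linform[OF assms(1)] by (simp add: prime_elem_dvd_mult_iff)
  then show ?thesis by (simp add: phi_dvd_iff)
qed

definition tdeg :: "nat\<times>nat\<times>nat \<Rightarrow> nat" where "tdeg t = (case t of (i,j,k) \<Rightarrow> i+j+k)"
definition const :: "complex \<Rightarrow> poly3" where "const c = Poly_Mapping.single (0,0,0) c"
definition X1 :: poly3 where "X1 = Poly_Mapping.single (1,0,0) 1"
definition X2 :: poly3 where "X2 = Poly_Mapping.single (0,1,0) 1"
definition X3 :: poly3 where "X3 = Poly_Mapping.single (0,0,1) 1"
definition lowdeg :: "nat \<Rightarrow> poly3 \<Rightarrow> bool" where
  "lowdeg r p \<longleftrightarrow> (\<forall>t\<in>Poly_Mapping.keys p. r \<le> tdeg t)"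

lemma tdeg_add[simp]: "tdeg (s+t) = tdeg s + tdeg t"
  by (cases s; cases t) (simp add: tdeg_def add_Pair)

lemma homog_iff: "homog r p \<longleftrightarrow> (\<forall>t\<in>Poly_Mapping.keys p. tdeg t = r)"
  unfolding homog_def tdeg_def by auto

lemma zero3: "(0::nat\<times>nat\<times>nat) = (0,0,0)"
  by (simp add: zero_prod_def)

lemma const_0[simp]: "const 0 = 0" by (simp add: const_def)
lemma const_1[simp]: "const 1 = 1" by (simp add: const_def zero3[symmetric])
lemma const_add: "const (a+b) = const a + const b" by (simp add: const_def single_add)
lemma const_mult: "const (a*b) = const a * const b" by (simp add: const_def mult_single)
lemma const_uminus: "const (-a) = - const a" by (simp add: const_def single_uminus)
lemma const_diff: "const (a-b) = const a - const b" by (simp add: const_def single_diff)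
lemma const_eq_0_iff[simp]: "const a = 0 \<longleftrightarrow> a = 0"
  unfolding const_def by (metis lookup_single_eq lookup_zero single_zero)
lemma const_of_nat: "const (of_nat n) = of_nat n" by (simp add: const_def zero3[symmetric])

lemma const_inv: "a \<noteq> 0 \<Longrightarrow> const a * const (1/a) = 1"
  by (simp add: const_mult[symmetric])

lemma linform_X: "linform (a,b,c) = const a * X1 + const b * X2 + const c * X3"
  by (simp add: linform_def const_def X1_def X2_def X3_def mult_single add_Pair)

lemma homog_0[simp]: "homog r 0" by (simp add: homog_iff)

lemma homog_add: "homog r a \<Longrightarrow> homog r b \<Longrightarrow> homog r (a+b)"
  unfolding homog_iff using keys_add[of a b] by blast

lemma homog_uminus: "homog r a \<Longrightarrow> homog r (-a)"
  unfolding homog_iff by (simp add: keys_minus)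

lemma homog_diff: "homog r a \<Longrightarrow> homog r b \<Longrightarrow> homog r (a-b)"
  using homog_add[of r a "-b"] homog_uminus[of r b] by simp

lemma homog_mult: "homog r a \<Longrightarrow> homog s b \<Longrightarrow> homog (r+s) (a*b)"
  unfolding homog_iff
proof
  fix t assume ha: "\<forall>t\<in>Poly_Mapping.keys a. tdeg t = r" and hb: "\<forall>t\<in>Poly_Mapping.keys b. tdeg t = s"
    and t: "t \<in> Poly_Mapping.keys (a*b)"
  then obtain x y where "t = x + y" "x \<in> Poly_Mapping.keys a" "y \<in> Poly_Mapping.keys b"
    using keys_mult[of a b] by blast
  then show "tdeg t = r + s" using ha hb by simp
qed

lemma homog_single: "homog (tdeg t) (Poly_Mapping.single t c)"
  by (simp add: homog_iff)

lemma homog_const: "homog 0 (const c)"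
  unfolding const_def using homog_single[of "(0,0,0)" c] by (simp add: tdeg_def)

lemma homog_X1: "homog 1 X1" unfolding X1_def using homog_single[of "(1,0,0)" 1] by (simp add: tdeg_def)
lemma homog_X2: "homog 1 X2" unfolding X2_def using homog_single[of "(0,1,0)" 1] by (simp add: tdeg_def)
lemma homog_X3: "homog 1 X3" unfolding X3_def using homog_single[of "(0,0,1)" 1] by (simp add: tdeg_def)

lemma homog_cmult: "homog r a \<Longrightarrow> homog r (const c * a)"
  using homog_mult[OF homog_const, of r a c] by simp

lemma homog_linform: "homog 1 (linform v)"
proof -
  obtain a b c where v: "v = (a,b,c)" by (cases v) auto
  show ?thesis unfolding v linform_X
    by (intro homog_add homog_cmult homog_X1 homog_X2 homog_X3)
qed

lemma homog_sum: "(\<And>x. x \<in> S \<Longrightarrow> homog r (f x)) \<Longrightarrow> homog r (sum f S)"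
  by (induction S rule: infinite_finite_induct) (auto intro: homog_add)

lemma homog_arr: "homog (length M) (arr_poly M)"
proof (induction M)
  case Nil then show ?case by (simp add: arr_poly_def const_1[symmetric] homog_const del: const_1)
next
  case (Cons a M)
  then show ?case using homog_mult[OF homog_linform Cons.IH, of a] by (simp add: arr_poly_def)
qed

lemma lowdeg_mult: "lowdeg r a \<Longrightarrow> lowdeg s b \<Longrightarrow> lowdeg (r+s) (a*b)"
  unfolding lowdeg_def
proof
  fix t assume ha: "\<forall>t\<in>Poly_Mapping.keys a. r \<le> tdeg t" and hb: "\<forall>t\<in>Poly_Mapping.keys b. s \<le> tdeg t"
    and t: "t \<in> Poly_Mapping.keys (a*b)"
  then obtain x y where "t = x + y" "x \<in> Poly_Mapping.keys a" "y \<in> Poly_Mapping.keys b"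
    using keys_mult[of a b] by blast
  then show "r + s \<le> tdeg t" using ha hb by (simp add: add_mono)
qed

lemma homog_lowdeg: "homog r a \<Longrightarrow> lowdeg r a"
  by (simp add: homog_iff lowdeg_def)

lemma lowdeg_0[simp]: "lowdeg 0 a" by (simp add: lowdeg_def)

lemma homog_lowdeg_zero: "homog r a \<Longrightarrow> lowdeg s a \<Longrightarrow> r < s \<Longrightarrow> a = 0"
  unfolding homog_iff lowdeg_def
  by (metis all_not_in_conv keys_eq_empty not_le)

lemma deg_ge:
  assumes "homog r a" "a = v * b" "homog e b" "a \<noteq> 0"
  shows "e \<le> r"
proof (rule ccontr)
  assume "\<not> e \<le> r"
  moreover have "lowdeg (0 + e) (v*b)" by (rule lowdeg_mult[OF lowdeg_0 homog_lowdeg[OF assms(3)]])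
  ultimately have "a = 0" using homog_lowdeg_zero[OF assms(1)] assms(2) by simp
  then show False using assms(4) by simp
qed

lemma const_part:
  fixes v :: poly3
  shows "lowdeg 1 (v - const (Poly_Mapping.lookup v (0,0,0)))"
proof -
  let ?w = "v - const (Poly_Mapping.lookup v (0,0,0))"
  have "Poly_Mapping.lookup ?w (0,0,0) = 0" by (simp add: const_def lookup_minus)
  then show ?thesis unfolding lowdeg_def
    by (metis One_nat_def add_is_0 case_prod_conv in_keys_iff less_one not_le prod_cases3 tdeg_def)
qed

lemma quot_const:
  assumes "q = v * b" "homog e q" "homog e b" "b \<noteq> 0"
  shows "\<exists>c. v = const c"
proof -
  define c where "c = Poly_Mapping.lookup v (0,0,0)"
  define w where "w = v - const c"
  have l: "lowdeg (1+e) (w*b)" using lowdeg_mult[OF const_part homog_lowdeg[OF assms(3)]] by (simp add: w_def c_def)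
  have eq: "w * b = q - const c * b" using assms(1) by (simp add: w_def algebra_simps)
  have h: "homog e (q - const c * b)" using assms(2,3) by (intro homog_diff homog_cmult)
  have "lowdeg (1+e) (q - const c * b)" using l eq by simp
  then have "q - const c * b = 0" using homog_lowdeg_zero[OF h] by simp
  then have "w * b = 0" using eq by simp
  then have "w = 0" using assms(4) by simp
  then show ?thesis unfolding w_def by auto
qed

definition Gx :: "nat\<times>nat\<times>nat \<Rightarrow> complex \<Rightarrow> poly3" where
  "Gx t c = (case t of (i,j,k) \<Rightarrow> Poly_Mapping.single (i - 1, j, k) (of_nat i * c))"
definition Gy :: "nat\<times>nat\<times>nat \<Rightarrow> complex \<Rightarrow> poly3" where
  "Gy t c = (case t of (i,j,k) \<Rightarrow> Poly_Mapping.single (i, j - 1, k) (of_nat j * c))"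
definition Gz :: "nat\<times>nat\<times>nat \<Rightarrow> complex \<Rightarrow> poly3" where
  "Gz t c = (case t of (i,j,k) \<Rightarrow> Poly_Mapping.single (i, j, k - 1) (of_nat k * c))"

lemma dx_SUMK: "dx p = SUMK Gx p" by (simp add: dx_def SUMK_def Gx_def)
lemma dy_SUMK: "dy p = SUMK Gy p" by (simp add: dy_def SUMK_def Gy_def)
lemma dz_SUMK: "dz p = SUMK Gz p" by (simp add: dz_def SUMK_def Gz_def)

lemma dx_add: "dx (p+q) = dx p + dx q"
  unfolding dx_SUMK by (rule SUMK_add) (auto simp: Gx_def single_add distrib_left split: prod.splits)
lemma dy_add: "dy (p+q) = dy p + dy q"
  unfolding dy_SUMK by (rule SUMK_add) (auto simp: Gy_def single_add distrib_left split: prod.splits)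
lemma dz_add: "dz (p+q) = dz p + dz q"
  unfolding dz_SUMK by (rule SUMK_add) (auto simp: Gz_def single_add distrib_left split: prod.splits)

lemma dx_single: "dx (Poly_Mapping.single (i,j,k) c) = Poly_Mapping.single (i - 1, j, k) (of_nat i * c)"
  unfolding dx_SUMK by (subst SUMK_single) (auto simp: Gx_def)
lemma dy_single: "dy (Poly_Mapping.single (i,j,k) c) = Poly_Mapping.single (i, j - 1, k) (of_nat j * c)"
  unfolding dy_SUMK by (subst SUMK_single) (auto simp: Gy_def)
lemma dz_single: "dz (Poly_Mapping.single (i,j,k) c) = Poly_Mapping.single (i, j, k - 1) (of_nat k * c)"
  unfolding dz_SUMK by (subst SUMK_single) (auto simp: Gz_def)

lemma dx_mult: "dx (p*q) = dx p * q + p * dx q"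
proof (rule bilin_eq[where F="\<lambda>p q. dx (p*q)" and G="\<lambda>p q. dx p * q + p * dx q"])
  fix s t :: "nat\<times>nat\<times>nat" and a b :: complex
  obtain i j k where s: "s = (i,j,k)" by (cases s) auto
  obtain i' j' k' where t: "t = (i',j',k')" by (cases t) auto
  show "dx (Poly_Mapping.single s a * Poly_Mapping.single t b) =
    dx (Poly_Mapping.single s a) * Poly_Mapping.single t b + Poly_Mapping.single s a * dx (Poly_Mapping.single t b)"
    unfolding s t
    by (cases "i = 0"; cases "i' = 0")
       (simp_all add: mult_single add_Pair dx_single single_add[symmetric] algebra_simps)
qed (simp_all add: dx_add algebra_simps)

lemma dy_mult: "dy (p*q) = dy p * q + p * dy q"
proof (rule bilin_eq[where F="\<lambda>p q. dy (p*q)" and G="\<lambda>p q. dy p * q + p * dy q"])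
  fix s t :: "nat\<times>nat\<times>nat" and a b :: complex
  obtain i j k where s: "s = (i,j,k)" by (cases s) auto
  obtain i' j' k' where t: "t = (i',j',k')" by (cases t) auto
  show "dy (Poly_Mapping.single s a * Poly_Mapping.single t b) =
    dy (Poly_Mapping.single s a) * Poly_Mapping.single t b + Poly_Mapping.single s a * dy (Poly_Mapping.single t b)"
    unfolding s t
    by (cases "j = 0"; cases "j' = 0")
       (simp_all add: mult_single add_Pair dy_single single_add[symmetric] algebra_simps)
qed (simp_all add: dy_add algebra_simps)

lemma dz_mult: "dz (p*q) = dz p * q + p * dz q"
proof (rule bilin_eq[where F="\<lambda>p q. dz (p*q)" and G="\<lambda>p q. dz p * q + p * dz q"])
  fix s t :: "nat\<times>nat\<times>nat" and a b :: complex
  obtain i j k where s: "s = (i,j,k)" by (cases s) auto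
  obtain i' j' k' where t: "t = (i',j',k')" by (cases t) auto
  show "dz (Poly_Mapping.single s a * Poly_Mapping.single t b) =
    dz (Poly_Mapping.single s a) * Poly_Mapping.single t b + Poly_Mapping.single s a * dz (Poly_Mapping.single t b)"
    unfolding s t
    by (cases "k = 0"; cases "k' = 0")
       (simp_all add: mult_single add_Pair dz_single single_add[symmetric] algebra_simps)
qed (simp_all add: dz_add algebra_simps)

lemma X1_single: "X1 * Poly_Mapping.single (i - 1, j, k) (of_nat i * c) = Poly_Mapping.single (i,j,k) (of_nat i * c)"
  by (cases i) (simp_all add: X1_def mult_single add_Pair)
lemma X2_single: "X2 * Poly_Mapping.single (i, j - 1, k) (of_nat j * c) = Poly_Mapping.single (i,j,k) (of_nat j * c)"
  by (cases j) (simp_all add: X2_def mult_single add_Pair)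
lemma X3_single: "X3 * Poly_Mapping.single (i, j, k - 1) (of_nat k * c) = Poly_Mapping.single (i,j,k) (of_nat k * c)"
  by (cases k) (simp_all add: X3_def mult_single add_Pair)

lemma const_single: "const a * Poly_Mapping.single t c = Poly_Mapping.single t (a*c)"
  by (cases t) (simp add: const_def mult_single add_Pair)

lemma euler_single: "X1 * dx (Poly_Mapping.single t c) + X2 * dy (Poly_Mapping.single t c) + X3 * dz (Poly_Mapping.single t c)
   = const (of_nat (tdeg t)) * Poly_Mapping.single t c"
proof -
  obtain i j k where t: "t = (i,j,k)" by (cases t) auto
  show ?thesis unfolding t dx_single dy_single dz_single X1_single X2_single X3_single const_single
    by (simp add: single_add[symmetric] tdeg_def algebra_simps)
qed

lemma euler:
  assumes "homog r q"
  shows "X1 * dx q + X2 * dy q + X3 * dz q = const (of_nat r) * q"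
proof -
  let ?F = "\<lambda>q. X1 * dx q + X2 * dy q + X3 * dz q"
  have add: "?F (p+q) = ?F p + ?F q" for p q by (simp add: dx_add dy_add dz_add algebra_simps)
  have "?F q = SUMK (\<lambda>t a. ?F (Poly_Mapping.single t a)) q" by (rule lin_ext[OF add])
  also have "\<dots> = (\<Sum>t\<in>Poly_Mapping.keys q. const (of_nat r) * Poly_Mapping.single t (Poly_Mapping.lookup q t))"
    unfolding SUMK_def euler_single using assms by (intro sum.cong) (auto simp: homog_iff)
  also have "\<dots> = const (of_nat r) * q"
    by (subst (2) pm_expand) (simp add: sum_distrib_left)
  finally show ?thesis .
qed

lemma homog_dx:
  assumes "homog r q" shows "homog (r - 1) (dx q)"
  unfolding dx_SUMK SUMK_def
proof (rule homog_sum)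
  fix t assume "t \<in> Poly_Mapping.keys q"
  then have "tdeg t = r" using assms by (simp add: homog_iff)
  then show "homog (r - 1) (Gx t (Poly_Mapping.lookup q t))"
    by (cases t) (auto simp: Gx_def homog_iff tdeg_def)
qed
lemma homog_dy:
  assumes "homog r q" shows "homog (r - 1) (dy q)"
  unfolding dy_SUMK SUMK_def
proof (rule homog_sum)
  fix t assume "t \<in> Poly_Mapping.keys q"
  then have "tdeg t = r" using assms by (simp add: homog_iff)
  then show "homog (r - 1) (Gy t (Poly_Mapping.lookup q t))"
    by (cases t) (auto simp: Gy_def homog_iff tdeg_def)
qed
lemma homog_dz:
  assumes "homog r q" shows "homog (r - 1) (dz q)"
  unfolding dz_SUMK SUMK_def
proof (rule homog_sum)
  fix t assume "t \<in> Poly_Mapping.keys q"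
  then have "tdeg t = r" using assms by (simp add: homog_iff)
  then show "homog (r - 1) (Gz t (Poly_Mapping.lookup q t))"
    by (cases t) (auto simp: Gz_def homog_iff tdeg_def)
qed

lemma dx_homog0: assumes "homog 0 q" shows "dx q = 0"
  unfolding dx_SUMK SUMK_def
proof (rule sum.neutral, rule ballI)
  fix t assume "t \<in> Poly_Mapping.keys q"
  then have "tdeg t = 0" using assms by (simp add: homog_iff)
  then show "Gx t (Poly_Mapping.lookup q t) = 0" by (cases t) (auto simp: Gx_def tdeg_def)
qed
lemma dy_homog0: assumes "homog 0 q" shows "dy q = 0"
  unfolding dy_SUMK SUMK_def
proof (rule sum.neutral, rule ballI)
  fix t assume "t \<in> Poly_Mapping.keys q"
  then have "tdeg t = 0" using assms by (simp add: homog_iff)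
  then show "Gy t (Poly_Mapping.lookup q t) = 0" by (cases t) (auto simp: Gy_def tdeg_def)
qed
lemma dz_homog0: assumes "homog 0 q" shows "dz q = 0"
  unfolding dz_SUMK SUMK_def
proof (rule sum.neutral, rule ballI)
  fix t assume "t \<in> Poly_Mapping.keys q"
  then have "tdeg t = 0" using assms by (simp add: homog_iff)
  then show "Gz t (Poly_Mapping.lookup q t) = 0" by (cases t) (auto simp: Gz_def tdeg_def)
qed

definition dot3 :: "poly3 \<times> poly3 \<times> poly3 \<Rightarrow> poly3 \<Rightarrow> poly3" where
  "dot3 \<rho> q = (case \<rho> of (a,b,c) \<Rightarrow> a * dx q + b * dy q + c * dz q)"

lemma AR_iff: "\<rho> \<in> AR f \<longleftrightarrow> dot3 \<rho> f = 0"
  by (cases \<rho>) (simp add: AR_def dot3_def)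

lemma dot3_mult: "dot3 \<rho> (q*r) = dot3 \<rho> q * r + q * dot3 \<rho> r"
  by (cases \<rho>) (simp add: dot3_def dx_mult dy_mult dz_mult algebra_simps)

lemma dx_linform: "dx (linform (a,b,c)) = const a"
  by (simp add: linform_def dx_add dx_single const_def)
lemma dy_linform: "dy (linform (a,b,c)) = const b"
  by (simp add: linform_def dy_add dy_single const_def)
lemma dz_linform: "dz (linform (a,b,c)) = const c"
  by (simp add: linform_def dz_add dz_single const_def)

lemma dot3_linform: "dot3 (r1,r2,r3) (linform (a,b,c)) = r1 * const a + r2 * const b + r3 * const c"
  by (simp add: dot3_def dx_linform dy_linform dz_linform)

lemma lookup_linform: "Poly_Mapping.lookup (linform (a,b,c)) (1,0,0) = a"
  "Poly_Mapping.lookup (linform (a,b,c)) (0,1,0) = b"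
  "Poly_Mapping.lookup (linform (a,b,c)) (0,0,1) = c"
  by (simp_all add: linform_def lookup_add lookup_single)

lemma linform_inj: "linform v = linform w \<Longrightarrow> v = w"
proof -
  assume e: "linform v = linform w"
  obtain a b c where v: "v = (a,b,c)" by (cases v) auto
  obtain a' b' c' where w: "w = (a',b',c')" by (cases w) auto
  show "v = w" using e lookup_linform[of a b c] lookup_linform[of a' b' c'] unfolding v w by metis
qed

lemma linform_zero: "linform (0,0,0) = 0"
  by (simp add: linform_def)

lemma linform_eq_0_iff: "linform v = 0 \<longleftrightarrow> v = (0,0,0)"
  using linform_inj[of v "(0,0,0)"] linform_zero by auto

lemma linform_cmult: "const t * linform (a,b,c) = linform (t*a, t*b, t*c)"
  by (simp add: linform_X const_mult algebra_simps)

lemma one_not_dvd: "v \<noteq> (0,0,0) \<Longrightarrow> \<not> linform v dvd 1"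
proof
  assume v: "v \<noteq> (0,0,0)" and d: "linform v dvd 1"
  from d obtain q where q: "1 = linform v * q" by (rule dvdE)
  have "lowdeg (1+0) (linform v * q)" by (rule lowdeg_mult[OF homog_lowdeg[OF homog_linform] lowdeg_0])
  then have l: "lowdeg 1 (1::poly3)" using q by simp
  have h: "homog 0 (1::poly3)" using homog_const[of 1] by simp
  have "(1::poly3) = 0" using homog_lowdeg_zero[OF h l] by simp
  then show False by simp
qed

lemma linform_dvd_linform:
  assumes "u \<noteq> (0,0,0)" "w \<noteq> (0,0,0)" "linform u dvd linform w"
  shows "proportional u w"
proof -
  obtain q where q: "linform w = linform u * q" using assms(3) by (rule dvdE)
  have "linform u \<noteq> 0" using assms(1) linform_eq_0_iff by simp
  moreover have q': "linform w = q * linform u" using q by (simp add: mult.commute)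
  ultimately obtain c where c: "q = const c" using quot_const[OF q' homog_linform homog_linform] by blast
  obtain a1 b1 c1 where u: "u = (a1,b1,c1)" by (cases u) auto
  have "linform w = linform (c*a1, c*b1, c*c1)" using q c u linform_cmult by (simp add: mult.commute)
  then have w: "w = (c*a1, c*b1, c*c1)" by (rule linform_inj)
  then have "c \<noteq> 0" using assms(2) by auto
  then show ?thesis unfolding proportional_def u w by auto
qed

lemma proportional_sym: "proportional u w \<Longrightarrow> proportional w u"
proof -
  assume "proportional u w"
  then obtain t where t: "t \<noteq> 0" "w = (case u of (a,b,c) \<Rightarrow> (t*a, t*b, t*c))" unfolding proportional_def by blast
  obtain a b c where u: "u = (a,b,c)" by (cases u) auto
  have "u = (case w of (a,b,c) \<Rightarrow> ((1/t)*a, (1/t)*b, (1/t)*c))" using t u by simp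
  moreover have "1/t \<noteq> 0" using t by simp
  ultimately show ?thesis unfolding proportional_def by blast
qed

lemma la_Cons: "line_arrangement (a # M) \<longleftrightarrow>
   a \<noteq> (0,0,0) \<and> (\<forall>w\<in>set M. \<not> proportional a w \<and> \<not> proportional w a) \<and> line_arrangement M"
proof
  assume h: "line_arrangement (a # M)"
  have 1: "a \<noteq> (0,0,0)" using h by (simp add: line_arrangement_def)
  have 2: "\<forall>w\<in>set M. \<not> proportional a w \<and> \<not> proportional w a"
  proof
    fix w assume "w \<in> set M"
    then obtain j where j: "j < length M" "M ! j = w" by (auto simp: in_set_conv_nth)
    have "\<not> proportional ((a#M) ! 0) ((a#M) ! Suc j)" "\<not> proportional ((a#M) ! Suc j) ((a#M) ! 0)"
      using h j unfolding line_arrangement_def by (metis Suc_less_eq length_Cons nat.distinct(1) zero_less_Suc)+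
    then show "\<not> proportional a w \<and> \<not> proportional w a" using j by simp
  qed
  have 3: "line_arrangement M"
    unfolding line_arrangement_def
  proof (intro conjI allI impI ballI)
    fix v assume "v \<in> set M" then show "v \<noteq> (0,0,0)" using h by (simp add: line_arrangement_def)
  next
    fix i j assume "i < length M" "j < length M" "i \<noteq> j"
    then have "\<not> proportional ((a#M) ! Suc i) ((a#M) ! Suc j)"
      using h unfolding line_arrangement_def by (metis Suc_less_eq length_Cons nat.inject)
    then show "\<not> proportional (M ! i) (M ! j)" by simp
  qed
  show "a \<noteq> (0,0,0) \<and> (\<forall>w\<in>set M. \<not> proportional a w \<and> \<not> proportional w a) \<and> line_arrangement M"
    using 1 2 3 by blast
next
  assume h: "a \<noteq> (0,0,0) \<and> (\<forall>w\<in>set M. \<not> proportional a w \<and> \<not> proportional w a) \<and> line_arrangement M"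
  show "line_arrangement (a # M)"
    unfolding line_arrangement_def
  proof (intro conjI allI impI ballI)
    fix v assume "v \<in> set (a#M)" then show "v \<noteq> (0,0,0)" using h by (auto simp: line_arrangement_def)
  next
    fix i j assume ij: "i < length (a#M)" "j < length (a#M)" "i \<noteq> j"
    show "\<not> proportional ((a#M) ! i) ((a#M) ! j)"
    proof (cases i)
      case 0
      then obtain j' where "j = Suc j'" "j' < length M" using ij by (cases j) auto
      then show ?thesis using h 0 by (simp add: nth_mem)
    next
      case (Suc i')
      show ?thesis
      proof (cases j)
        case 0
        then show ?thesis using h Suc ij by (simp add: nth_mem)
      next
        case (Suc j')
        then show ?thesis using h \<open>i = Suc i'\<close> ij by (simp add: line_arrangement_def)
      qed
    qed
  qed
qed

lemma la_filter: "line_arrangement L \<Longrightarrow> line_arrangement (filter P L)"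
  by (induction L) (auto simp: la_Cons)

lemma arr_Cons: "arr_poly (a # M) = linform a * arr_poly M"
  by (simp add: arr_poly_def)

lemma arr_Nil: "arr_poly [] = 1"
  by (simp add: arr_poly_def)

lemma arr_nonzero: "line_arrangement M \<Longrightarrow> arr_poly M \<noteq> 0"
  by (induction M) (auto simp: arr_Nil arr_Cons la_Cons linform_eq_0_iff)

lemma arr_filter: "arr_poly L = arr_poly (filter P L) * arr_poly (filter (\<lambda>x. \<not> P x) L)"
  by (induction L) (auto simp: arr_Nil arr_Cons algebra_simps)

lemma L0:
  assumes "v \<noteq> (0,0,0)" "linform v dvd arr_poly M"
  shows "\<exists>w\<in>set M. linform v dvd linform w"
  using assms(2)
proof (induction M)
  case Nil then show ?case using one_not_dvd[OF assms(1)] by (simp add: arr_Nil)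
next
  case (Cons a M)
  then have "linform v dvd linform a \<or> linform v dvd arr_poly M"
    using linform_dvd_mult[OF assms(1)] by (simp add: arr_Cons)
  then show ?case using Cons.IH by auto
qed

lemma not_dvd_arr:
  assumes "v \<noteq> (0,0,0)" "\<forall>w\<in>set M. w \<noteq> (0,0,0) \<and> \<not> proportional v w"
  shows "\<not> linform v dvd arr_poly M"
  using L0[OF assms(1)] assms(2) linform_dvd_linform[OF assms(1)] by blast

lemma L1:
  assumes "line_arrangement M" "l \<in> set M"
  shows "\<exists>k. arr_poly M = linform l * k \<and> \<not> linform l dvd k"
  using assms
proof (induction M)
  case Nil then show ?case by simp
next
  case (Cons a M)
  have a0: "a \<noteq> (0,0,0)" and na: "\<forall>w\<in>set M. \<not> proportional a w \<and> \<not> proportional w a"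
    and laM: "line_arrangement M" using Cons.prems(1) by (auto simp: la_Cons)
  have nzM: "\<forall>w\<in>set M. w \<noteq> (0,0,0)" using laM by (simp add: line_arrangement_def)
  show ?case
  proof (cases "l = a")
    case True
    have "\<not> linform a dvd arr_poly M" using not_dvd_arr[OF a0] na nzM by blast
    then show ?thesis using True by (auto simp: arr_Cons)
  next
    case False
    then have lM: "l \<in> set M" using Cons.prems(2) by simp
    obtain k where k: "arr_poly M = linform l * k" "\<not> linform l dvd k" using Cons.IH[OF laM lM] by blast
    have l0: "l \<noteq> (0,0,0)" using nzM lM by blast
    have "\<not> linform l dvd linform a"
      using linform_dvd_linform[OF l0 a0] na lM by blast
    then have "\<not> linform l dvd linform a * k" using linform_dvd_mult[OF l0] k(2) by blast
    moreover have "arr_poly (a#M) = linform l * (linform a * k)" using k(1) by (simp add: arr_Cons algebra_simps)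
    ultimately show ?thesis by blast
  qed
qed

lemma L2:
  assumes "line_arrangement M" "\<forall>l\<in>set M. linform l dvd W"
  shows "arr_poly M dvd W"
  using assms
proof (induction M arbitrary: W)
  case Nil then show ?case by (simp add: arr_Nil)
next
  case (Cons a M)
  have a0: "a \<noteq> (0,0,0)" and na: "\<forall>w\<in>set M. \<not> proportional a w \<and> \<not> proportional w a"
    and laM: "line_arrangement M" using Cons.prems(1) by (auto simp: la_Cons)
  have nzM: "\<forall>w\<in>set M. w \<noteq> (0,0,0)" using laM by (simp add: line_arrangement_def)
  have "arr_poly M dvd W" using Cons.IH[OF laM] Cons.prems(2) by simp
  then obtain q where q: "W = arr_poly M * q" by (rule dvdE)
  have nd: "\<not> linform a dvd arr_poly M" using not_dvd_arr[OF a0] na nzM by blast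
  have "linform a dvd arr_poly M * q" using Cons.prems(2) q by simp
  then have "linform a dvd q" using linform_dvd_mult[OF a0] nd by blast
  then obtain r where "q = linform a * r" by (rule dvdE)
  then have "W = arr_poly (a#M) * r" using q by (simp add: arr_Cons algebra_simps)
  then show ?case by (rule dvdI)
qed

lemma ident_tangent:
  fixes a b c x1 x2 x3 q1 q2 q3 v1 v2 v3 w1 w2 w3 :: "'a::comm_ring_1"
  shows "(a*(q3*x2 - q2*x3) - b*(q3*x1 - q1*x3) + c*(q2*x1 - q1*x2)) * (v1*w1 + v2*w2 + v3*w3)
   = (a*v1 + b*v2 + c*v3) * ((x2*q3 - x3*q2)*w1 + (x3*q1 - x1*q3)*w2 + (x1*q2 - x2*q1)*w3)
   + (v1*x1 + v2*x2 + v3*x3) * ((q2*c - q3*b)*w1 + (q3*a - q1*c)*w2 + (q1*b - q2*a)*w3)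
   + (q1*v1 + q2*v2 + q3*v3) * ((b*x3 - c*x2)*w1 + (c*x1 - a*x3)*w2 + (a*x2 - b*x1)*w3)"
  by (simp add: algebra_simps)

lemma ident_k3:
  fixes a b c x1 x2 x3 q1 q2 q3 :: "'a::comm_ring_1"
  shows "(q3*a - c*q1) * (q3*x2 - q2*x3) - (q3*b - c*q2) * (q3*x1 - q1*x3)
    = q3 * (a*(q3*x2 - q2*x3) - b*(q3*x1 - q1*x3) + c*(q2*x1 - q1*x2))"
  by (simp add: algebra_simps)

lemma ident_k2:
  fixes a b c x1 x2 x3 q1 q2 q3 :: "'a::comm_ring_1"
  shows "(q2*a - b*q1) * (q2*x3 - q3*x2) - (q2*c - b*q3) * (q2*x1 - q1*x2)
    = - (q2 * (a*(q3*x2 - q2*x3) - b*(q3*x1 - q1*x3) + c*(q2*x1 - q1*x2)))"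
  by (simp add: algebra_simps)

lemma ident_k1:
  fixes a b c x1 x2 x3 q1 q2 q3 :: "'a::comm_ring_1"
  shows "(q1*b - a*q2) * (q1*x3 - q3*x1) - (q1*c - a*q3) * (q1*x2 - q2*x1)
    = q1 * (a*(q3*x2 - q2*x3) - b*(q3*x1 - q1*x3) + c*(q2*x1 - q1*x2))"
  by (simp add: algebra_simps)

lemma solve_lin:
  fixes a c u x z q q1 r :: "'a::comm_ring_1"
  assumes "q*r = 1" "q*a - c*q1 = u*(q*x - q1*z)"
  shows "a = u*x + (c - u*z)*r*q1"
proof -
  have "a = (q*a)*r" using assms(1) by (metis mult.assoc mult.commute mult.right_neutral)
  also have "\<dots> = (c*q1 + u*(q*x - q1*z))*r"
  proof -
    have e: "q*a = c*q1 + u*(q*x - q1*z)" using assms(2) by (metis add.commute diff_eq_eq)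
    show ?thesis by (simp only: e)
  qed
  also have "\<dots> = u*x*(q*r) + (c - u*z)*r*q1" by (simp add: algebra_simps)
  finally show ?thesis using assms(1) by simp
qed

definition Wp :: "complex\<times>complex\<times>complex \<Rightarrow> poly3\<times>poly3\<times>poly3 \<Rightarrow> poly3" where
  "Wp p \<rho> = (case p of (p1,p2,p3) \<Rightarrow> case \<rho> of (a,b,c) \<Rightarrow>
    a*(const p3*X2 - const p2*X3) - b*(const p3*X1 - const p1*X3) + c*(const p2*X1 - const p1*X2))"

lemma Wp_add3: "Wp p (add3 x y) = Wp p x + Wp p y"
  by (cases p; cases x; cases y) (simp add: Wp_def add3_def algebra_simps)
lemma Wp_smul3: "Wp p (smul3 g x) = g * Wp p x"
  by (cases p; cases x) (simp add: Wp_def smul3_def algebra_simps)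
lemma dot3_add3: "dot3 (add3 x y) q = dot3 x q + dot3 y q"
  by (cases x; cases y) (simp add: dot3_def add3_def algebra_simps)
lemma dot3_smul3: "dot3 (smul3 g x) q = g * dot3 x q"
  by (cases x) (simp add: dot3_def smul3_def algebra_simps)

lemma AR_comb: "x \<in> AR f \<Longrightarrow> y \<in> AR f \<Longrightarrow> add3 (smul3 a x) (smul3 b y) \<in> AR f"
  by (simp add: AR_iff dot3_add3 dot3_smul3)

lemma on_line_iff: "on_line (p1,p2,p3) (a,b,c) \<longleftrightarrow> p1*a + p2*b + p3*c = 0"
  by (simp add: on_line_def algebra_simps)

lemma Dp_lin: "dot3 (const p1, const p2, const p3) (linform (a,b,c)) = const (p1*a + p2*b + p3*c)"
  by (simp add: dot3_linform const_add const_mult)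

lemma Dp_arr_on:
  assumes "\<forall>v\<in>set M. on_line (p1,p2,p3) v"
  shows "dot3 (const p1, const p2, const p3) (arr_poly M) = 0"
  using assms
proof (induction M)
  case Nil
  have "dot3 (const p1, const p2, const p3) 1 = 0"
    using dot3_mult[of "(const p1, const p2, const p3)" 1 1] by simp
  then show ?case by (simp add: arr_Nil)
next
  case (Cons v M)
  obtain a b c where v: "v = (a,b,c)" by (cases v) auto
  have "p1*a + p2*b + p3*c = 0" using Cons.prems v on_line_iff by simp
  then have "dot3 (const p1, const p2, const p3) (linform v) = 0" using Dp_lin v by simp
  then show ?case using Cons by (simp add: arr_Cons dot3_mult)
qed

lemma cnj_sum_nz:
  assumes "(a,b,c) \<noteq> (0::complex,0::complex,0::complex)"
  shows "a * cnj a + b * cnj b + c * cnj c \<noteq> 0"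
proof -
  have "a * cnj a + b * cnj b + c * cnj c = complex_of_real ((cmod a)^2 + (cmod b)^2 + (cmod c)^2)"
    by (simp only: of_real_add complex_norm_square)
  moreover have "(cmod a)^2 + (cmod b)^2 + (cmod c)^2 > 0"
    using assms by (auto simp: add_pos_nonneg add_nonneg_pos)
  ultimately show ?thesis by (metis less_irrefl of_real_eq_0_iff)
qed

lemma tangent_line:
  assumes v0: "v \<noteq> (0,0,0)" and on: "on_line p v"
    and fk: "F = linform v * k" and nd: "\<not> linform v dvd k" and ar: "dot3 \<rho> F = 0"
  shows "linform v dvd Wp p \<rho>"
proof -
  obtain a b c where \<rho>: "\<rho> = (a,b,c)" by (cases \<rho>) auto
  obtain v1 v2 v3 where v: "v = (v1,v2,v3)" by (cases v) auto
  obtain p1 p2 p3 where p: "p = (p1,p2,p3)" by (cases p) auto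
  let ?s = "dot3 \<rho> (linform v)"
  have "dot3 \<rho> F = ?s * k + linform v * dot3 \<rho> k" using fk by (simp add: dot3_mult)
  then have "?s * k = linform v * (- dot3 \<rho> k)" using ar by (simp add: eq_neg_iff_add_eq_0)
  then have "linform v dvd ?s * k" by (metis dvdI)
  then have ds: "linform v dvd ?s" using linform_dvd_mult[OF v0] nd by blast
  have s: "?s = a * const v1 + b * const v2 + c * const v3" using \<rho> v by (simp add: dot3_linform)
  have lv: "linform v = const v1 * X1 + const v2 * X2 + const v3 * X3" using v by (simp add: linform_X)
  have pv: "const p1 * const v1 + const p2 * const v2 + const p3 * const v3 = 0"
    using on p v by (simp add: on_line_iff const_add[symmetric] const_mult[symmetric])
  define N where "N = v1 * cnj v1 + v2 * cnj v2 + v3 * cnj v3"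
  have N0: "N \<noteq> 0" using cnj_sum_nz v0 v N_def by simp
  have NN: "const N = const v1 * const (cnj v1) + const v2 * const (cnj v2) + const v3 * const (cnj v3)"
    by (simp add: N_def const_add const_mult)
  define A where "A = (X2*const p3 - X3*const p2)*const (cnj v1) + (X3*const p1 - X1*const p3)*const (cnj v2) + (X1*const p2 - X2*const p1)*const (cnj v3)"
  define B where "B = (const p2*c - const p3*b)*const (cnj v1) + (const p3*a - const p1*c)*const (cnj v2) + (const p1*b - const p2*a)*const (cnj v3)"
  define C where "C = (b*X3 - c*X2)*const (cnj v1) + (c*X1 - a*X3)*const (cnj v2) + (a*X2 - b*X1)*const (cnj v3)"
  have id0: "Wp p \<rho> * const N = (a*const v1 + b*const v2 + c*const v3) * A
     + (const v1*X1 + const v2*X2 + const v3*X3) * B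
     + (const p1 * const v1 + const p2 * const v2 + const p3 * const v3) * C"
    unfolding NN Wp_def \<rho> p A_def B_def C_def by (simp only: prod.case) (rule ident_tangent)
  have id: "Wp p \<rho> * const N = ?s * A + linform v * B"
    using id0 unfolding s[symmetric] lv[symmetric] pv by simp
  have "linform v dvd Wp p \<rho> * const N" unfolding id using ds by (simp add: dvd_add dvd_mult2)
  then have "linform v dvd Wp p \<rho> * const N * const (1/N)" by (rule dvd_mult2)
  then show ?thesis using const_inv[OF N0] by (simp add: mult.assoc)
qed

locale arrp =
  fixes L :: "(complex \<times> complex \<times> complex) list" and p1 p2 p3 :: complex
  assumes la: "line_arrangement L" and p0: "(p1,p2,p3) \<noteq> (0,0,0)"
    and m2: "2 \<le> length (filter (on_line (p1,p2,p3)) L)"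
begin

definition "LP = filter (on_line (p1,p2,p3)) L"
definition "LN = filter (\<lambda>v. \<not> on_line (p1,p2,p3) v) L"
definition "f = arr_poly L"
definition "g = arr_poly LP"
definition "h = arr_poly LN"
definition "d = length L"
definition "m = length LP"
definition "q1 = const p1"
definition "q2 = const p2"
definition "q3 = const p3"
definition "Dh = dot3 (q1,q2,q3) h"
definition "D = const (of_nat d)"
definition "Dinv = const (1 / of_nat d)"
definition "delta = (Dh*X1 - D*h*q1, Dh*X2 - D*h*q2, Dh*X3 - D*h*q3)"
definition "W \<rho> = Wp (p1,p2,p3) \<rho>"

lemma f_gh: "f = g * h"
  unfolding f_def g_def h_def LP_def LN_def by (rule arr_filter)

lemma d_eq: "d = m + length LN"
  unfolding d_def m_def LP_def LN_def by (simp add: sum_length_filter_compl)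

lemma m_ge: "2 \<le> m" using m2 by (simp add: m_def LP_def)

lemma d_ge: "2 \<le> d" using d_eq m_ge by simp

lemma DDinv: "D * Dinv = 1"
  unfolding D_def Dinv_def using d_ge by (intro const_inv) simp

lemma D0: "D \<noteq> 0" using DDinv by auto

lemma laP: "line_arrangement LP" unfolding LP_def using la by (rule la_filter)
lemma laN: "line_arrangement LN" unfolding LN_def using la by (rule la_filter)

lemma g0: "g \<noteq> 0" unfolding g_def using laP by (rule arr_nonzero)
lemma h0: "h \<noteq> 0" unfolding h_def using laN by (rule arr_nonzero)

lemma homog_g: "homog m g" unfolding g_def m_def by (rule homog_arr)
lemma homog_h: "homog (d - m) h" unfolding h_def using d_eq homog_arr[of LN] by simp
lemma homog_f: "homog d f" unfolding f_def d_def by (rule homog_arr)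

lemma Dg: "dot3 (q1,q2,q3) g = 0"
  unfolding g_def q1_def q2_def q3_def LP_def by (rule Dp_arr_on) simp

lemma Df: "dot3 (q1,q2,q3) f = g * Dh"
  unfolding f_gh Dh_def by (simp add: dot3_mult Dg)

lemma Ef: "dot3 (X1,X2,X3) f = D * f"
  unfolding D_def using euler[OF homog_f] by (simp add: dot3_def)

lemma delta_AR: "delta \<in> AR f"
proof -
  have "dot3 delta f = Dh * dot3 (X1,X2,X3) f - D * h * dot3 (q1,q2,q3) f"
    unfolding delta_def by (simp add: dot3_def algebra_simps)
  also have "\<dots> = Dh * (D*f) - D*h*(g*Dh)" by (simp only: Ef Df)
  also have "\<dots> = 0" by (simp add: f_gh algebra_simps)
  finally show ?thesis by (simp add: AR_iff)
qed

lemma homog_Dh: "homog (d - m - 1) Dh"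
proof -
  have a: "homog (d-m-1) (dx h)" by (rule homog_dx[OF homog_h])
  have b: "homog (d-m-1) (dy h)" by (rule homog_dy[OF homog_h])
  have c: "homog (d-m-1) (dz h)" by (rule homog_dz[OF homog_h])
  show ?thesis unfolding Dh_def dot3_def q1_def q2_def q3_def
    by (simp only: prod.case) (intro homog_add homog_cmult a b c)
qed

lemma Dh_0: "d - m = 0 \<Longrightarrow> Dh = 0"
  unfolding Dh_def dot3_def using homog_h dx_homog0 dy_homog0 dz_homog0 by simp

lemma homog_DhX: assumes "homog 1 X" shows "homog (d - m) (Dh * X)"
proof (cases "d - m = 0")
  case True then show ?thesis using Dh_0 by simp
next
  case False
  then have e: "d - m - 1 + 1 = d - m" by simp
  show ?thesis using homog_mult[OF homog_Dh assms] unfolding e .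
qed

lemma homog_Dhq: "homog (d - m) (D * h * const c)"
  unfolding D_def using homog_cmult[OF homog_cmult[OF homog_h]] by (simp add: algebra_simps)

lemma delta_syz: "homog_syz f (d - m) delta"
  unfolding homog_syz_def delta_def using delta_AR
  by (auto simp: delta_def q1_def q2_def q3_def intro!: homog_diff homog_DhX homog_Dhq homog_X1 homog_X2 homog_X3)

lemma lin_nz: "(a,b,c) \<noteq> (0,0,0) \<Longrightarrow> const a * X1 + const b * X2 + const c * X3 \<noteq> 0"
  using linform_eq_0_iff[of "(a,b,c)"] by (simp add: linform_X)

lemma delta_nz: "delta \<noteq> (0,0,0)"
proof
  assume "delta = (0,0,0)"
  then have e1: "Dh*X1 = D*h*q1" and e2: "Dh*X2 = D*h*q2" and e3: "Dh*X3 = D*h*q3"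
    by (auto simp: delta_def)
  have Dhh: "D * h \<noteq> 0" using D0 h0 by simp
  show False
  proof (cases "Dh = 0")
    case True
    then have "D*h*q1 = 0" "D*h*q2 = 0" "D*h*q3 = 0" using e1 e2 e3 by auto
    then have "q1 = 0" "q2 = 0" "q3 = 0" using Dhh by auto
    then show False using p0 by (simp add: q1_def q2_def q3_def)
  next
    case False
    have "Dh * (const p2 * X1 + const (-p1) * X2 + const 0 * X3) = const p2 * (Dh*X1) - const p1 * (Dh*X2)"
      by (simp add: const_uminus algebra_simps)
    also have "\<dots> = const p2 * (D*h*q1) - const p1 * (D*h*q2)" by (simp only: e1 e2)
    also have "\<dots> = 0" by (simp add: q1_def q2_def algebra_simps)
    finally have "Dh * (const p2 * X1 + const (-p1) * X2 + const 0 * X3) = 0" .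
    then have a: "const p2 * X1 + const (-p1) * X2 + const 0 * X3 = 0" using False by simp
    have "Dh * (const p3 * X1 + const 0 * X2 + const (-p1) * X3) = const p3 * (Dh*X1) - const p1 * (Dh*X3)"
      by (simp add: const_uminus algebra_simps)
    also have "\<dots> = const p3 * (D*h*q1) - const p1 * (D*h*q3)" by (simp only: e1 e3)
    also have "\<dots> = 0" by (simp add: q1_def q3_def algebra_simps)
    finally have "Dh * (const p3 * X1 + const 0 * X2 + const (-p1) * X3) = 0" .
    then have b: "const p3 * X1 + const 0 * X2 + const (-p1) * X3 = 0" using False by simp
    have "p2 = 0 \<and> p1 = 0" using lin_nz[of p2 "-p1" 0] a by auto
    moreover have "p3 = 0" using lin_nz[of p3 0 "-p1"] b by auto
    ultimately show False using p0 by simp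
  qed
qed

lemma W_delta: "W delta = 0"
  unfolding W_def delta_def Wp_def q1_def q2_def q3_def by (simp add: algebra_simps)

lemma homog_W:
  assumes "homog_syz f r \<rho>" shows "homog (r+1) (W \<rho>)"
proof -
  obtain a b c where \<rho>: "\<rho> = (a,b,c)" by (cases \<rho>) auto
  have h: "homog r a" "homog r b" "homog r c" using assms \<rho> by (auto simp: homog_syz_def)
  have l: "homog 1 (const x * Y - const y * Z)" if "homog 1 Y" "homog 1 Z" for x y Y Z
    using that by (intro homog_diff homog_cmult)
  show ?thesis unfolding W_def Wp_def \<rho>
    by (simp only: prod.case) (intro homog_add homog_diff homog_mult h l homog_X1 homog_X2 homog_X3)
qed

lemma tangent_g:
  assumes "\<rho> \<in> AR f" shows "g dvd W \<rho>"
  unfolding g_def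
proof (rule L2[OF laP], rule ballI)
  fix l assume lP: "l \<in> set LP"
  then have lL: "l \<in> set L" and on: "on_line (p1,p2,p3) l" by (auto simp: LP_def)
  have l0: "l \<noteq> (0,0,0)" using la lL by (simp add: line_arrangement_def)
  obtain k where k: "arr_poly L = linform l * k" "\<not> linform l dvd k" using L1[OF la lL] by blast
  show "linform l dvd W \<rho>" unfolding W_def
    by (rule tangent_line[OF l0 on k(1) k(2)]) (use assms in \<open>simp add: AR_iff f_def\<close>)
qed

end

lemma TL:
  assumes a0: "\<alpha> \<noteq> (0,0,0)" and b0: "\<beta> \<noteq> (0,0,0)" and np: "\<not> proportional \<alpha> \<beta>"
    and e: "s1 * linform \<beta> = s2 * linform \<alpha>"
  shows "\<exists>u. s1 = u * linform \<alpha> \<and> s2 = u * linform \<beta>"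
proof -
  have "linform \<alpha> dvd s1 * linform \<beta>" unfolding e by simp
  moreover have "\<not> linform \<alpha> dvd linform \<beta>" using linform_dvd_linform[OF a0 b0] np by blast
  ultimately have "linform \<alpha> dvd s1" using linform_dvd_mult[OF a0] by blast
  then obtain u where u: "s1 = linform \<alpha> * u" by (rule dvdE)
  have "linform \<alpha> * (u * linform \<beta>) = linform \<alpha> * s2" using e u by (simp add: algebra_simps)
  moreover have "linform \<alpha> \<noteq> 0" using a0 linform_eq_0_iff by simp
  ultimately have "u * linform \<beta> = s2" by simp
  then show ?thesis using u by (auto simp: mult.commute)
qed

context arrp
begin

lemma W_expr: "W (a,b,c) = a*(q3*X2 - q2*X3) - b*(q3*X1 - q1*X3) + c*(q2*X1 - q1*X2)"
  by (simp add: W_def Wp_def q1_def q2_def q3_def)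

lemma dec:
  assumes "W \<rho> = 0"
  shows "\<exists>u w. \<rho> = (u*X1 + w*q1, u*X2 + w*q2, u*X3 + w*q3)"
proof -
  obtain a b c where \<rho>: "\<rho> = (a,b,c)" by (cases \<rho>) auto
  have W0: "a*(q3*X2 - q2*X3) - b*(q3*X1 - q1*X3) + c*(q2*X1 - q1*X2) = 0"
    using assms \<rho> W_expr by simp
  consider "p3 \<noteq> 0" | "p2 \<noteq> 0" | "p1 \<noteq> 0" using p0 by auto
  then show ?thesis
  proof cases
    case 1
    have la: "linform (p3, 0, -p1) = q3*X1 - q1*X3" by (simp add: linform_X q1_def q3_def const_uminus)
    have lb: "linform (0, p3, -p2) = q3*X2 - q2*X3" by (simp add: linform_X q2_def q3_def const_uminus)
    have np: "\<not> proportional (p3, 0, -p1) (0, p3, -p2)" using 1 by (auto simp: proportional_def)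
    have "(q3*a - c*q1) * (q3*X2 - q2*X3) - (q3*b - c*q2) * (q3*X1 - q1*X3) = 0"
      unfolding ident_k3 W0 by simp
    then have "(q3*a - c*q1) * linform (0, p3, -p2) = (q3*b - c*q2) * linform (p3, 0, -p1)"
      unfolding la lb by simp
    then obtain u where u: "q3*a - c*q1 = u * (q3*X1 - q1*X3)" "q3*b - c*q2 = u * (q3*X2 - q2*X3)"
      using TL[OF _ _ np] 1 unfolding la lb by fastforce
    define r where "r = const (1/p3)"
    have qr: "q3 * r = 1" unfolding r_def q3_def using 1 by (rule const_inv)
    have ea: "a = u*X1 + (c - u*X3)*r*q1" by (rule solve_lin[OF qr u(1)])
    have eb: "b = u*X2 + (c - u*X3)*r*q2" by (rule solve_lin[OF qr u(2)])
    have ec: "c = u*X3 + (c - u*X3)*r*q3" using qr by (simp add: algebra_simps)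
    show ?thesis unfolding \<rho> using ea eb ec by (intro exI[of _ u] exI[of _ "(c - u*X3)*r"]) simp
  next
    case 2
    have la: "linform (p2, -p1, 0) = q2*X1 - q1*X2" by (simp add: linform_X q1_def q2_def const_uminus)
    have lb: "linform (0, -p3, p2) = q2*X3 - q3*X2" by (simp add: linform_X q2_def q3_def const_uminus)
    have np: "\<not> proportional (p2, -p1, 0) (0, -p3, p2)" using 2 by (auto simp: proportional_def)
    have "(q2*a - b*q1) * (q2*X3 - q3*X2) - (q2*c - b*q3) * (q2*X1 - q1*X2) = 0"
      unfolding ident_k2 W0 by simp
    then have "(q2*a - b*q1) * linform (0, -p3, p2) = (q2*c - b*q3) * linform (p2, -p1, 0)"
      unfolding la lb by simp
    then obtain u where u: "q2*a - b*q1 = u * (q2*X1 - q1*X2)" "q2*c - b*q3 = u * (q2*X3 - q3*X2)"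
      using TL[OF _ _ np] 2 unfolding la lb by fastforce
    define r where "r = const (1/p2)"
    have qr: "q2 * r = 1" unfolding r_def q2_def using 2 by (rule const_inv)
    have ea: "a = u*X1 + (b - u*X2)*r*q1" by (rule solve_lin[OF qr u(1)])
    have ec: "c = u*X3 + (b - u*X2)*r*q3" by (rule solve_lin[OF qr u(2)])
    have eb: "b = u*X2 + (b - u*X2)*r*q2" using qr by (simp add: algebra_simps)
    show ?thesis unfolding \<rho> using ea eb ec by (intro exI[of _ u] exI[of _ "(b - u*X2)*r"]) simp
  next
    case 3
    have la: "linform (-p2, p1, 0) = q1*X2 - q2*X1" by (simp add: linform_X q1_def q2_def const_uminus)
    have lb: "linform (-p3, 0, p1) = q1*X3 - q3*X1" by (simp add: linform_X q1_def q3_def const_uminus)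
    have np: "\<not> proportional (-p2, p1, 0) (-p3, 0, p1)" using 3 by (auto simp: proportional_def)
    have "(q1*b - a*q2) * (q1*X3 - q3*X1) - (q1*c - a*q3) * (q1*X2 - q2*X1) = 0"
      unfolding ident_k1 W0 by simp
    then have "(q1*b - a*q2) * linform (-p3, 0, p1) = (q1*c - a*q3) * linform (-p2, p1, 0)"
      unfolding la lb by simp
    then obtain u where u: "q1*b - a*q2 = u * (q1*X2 - q2*X1)" "q1*c - a*q3 = u * (q1*X3 - q3*X1)"
      using TL[OF _ _ np] 3 unfolding la lb by fastforce
    define r where "r = const (1/p1)"
    have qr: "q1 * r = 1" unfolding r_def q1_def using 3 by (rule const_inv)
    have eb: "b = u*X2 + (a - u*X1)*r*q2" by (rule solve_lin[OF qr u(1)])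
    have ec: "c = u*X3 + (a - u*X1)*r*q3" by (rule solve_lin[OF qr u(2)])
    have ea: "a = u*X1 + (a - u*X1)*r*q1" using qr by (simp add: algebra_simps)
    show ?thesis unfolding \<rho> using ea eb ec by (intro exI[of _ u] exI[of _ "(a - u*X1)*r"]) simp
  qed
qed

lemma cop:
  assumes "h dvd w * Dh" shows "h dvd w"
  unfolding h_def
proof (rule L2[OF laN], rule ballI)
  fix l assume lN: "l \<in> set LN"
  then have off: "\<not> on_line (p1,p2,p3) l" by (simp add: LN_def)
  have l0: "l \<noteq> (0,0,0)" using laN lN by (simp add: line_arrangement_def)
  obtain k where k: "h = linform l * k" "\<not> linform l dvd k" using L1[OF laN lN] by (auto simp: h_def)
  obtain a b c where l: "l = (a,b,c)" by (cases l) auto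
  define cl where "cl = p1*a + p2*b + p3*c"
  have cl0: "cl \<noteq> 0" using off l by (simp add: on_line_iff cl_def)
  have "Dh = const cl * k + linform l * dot3 (q1,q2,q3) k"
    unfolding Dh_def k(1) dot3_mult q1_def q2_def q3_def l Dp_lin cl_def ..
  then have e: "w * Dh = (w * k) * const cl + linform l * (w * dot3 (q1,q2,q3) k)"
    by (simp add: algebra_simps)
  have "linform l dvd w * Dh" using assms k(1) by (metis dvd_mult_left)
  then have "linform l dvd (w * k) * const cl" unfolding e by (simp add: dvd_add_left_iff)
  then have "linform l dvd (w * k) * const cl * const (1/cl)" by (rule dvd_mult2)
  then have "linform l dvd w * k" using const_inv[OF cl0] by (simp add: mult.assoc)
  then show "linform l dvd w" using linform_dvd_mult[OF l0] k(2) by blast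
qed

lemma key:
  assumes ar: "\<rho> \<in> AR f" and W0: "W \<rho> = 0"
  shows "\<exists>v. \<rho> = smul3 v delta"
proof -
  obtain u w where \<rho>: "\<rho> = (u*X1 + w*q1, u*X2 + w*q2, u*X3 + w*q3)" using dec[OF W0] by blast
  have "dot3 \<rho> f = u * dot3 (X1,X2,X3) f + w * dot3 (q1,q2,q3) f"
    unfolding \<rho> by (simp add: dot3_def algebra_simps)
  also have "\<dots> = u * (D*f) + w * (g*Dh)" by (simp only: Ef Df)
  also have "\<dots> = g * (u*D*h + w*Dh)" by (simp add: f_gh algebra_simps)
  finally have "g * (u*D*h + w*Dh) = 0" using ar by (simp add: AR_iff)
  then have e: "u*D*h + w*Dh = 0" using g0 by simp
  then have "w * Dh = h * (-(u*D))" by (simp add: algebra_simps eq_neg_iff_add_eq_0)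
  then have "h dvd w * Dh" by (metis dvdI)
  then have "h dvd w" by (rule cop)
  then obtain v where hw: "w = h * v" by (rule dvdE)
  have "h * (u*D + v*Dh) = 0" using e hw by (simp add: algebra_simps)
  then have "u*D + v*Dh = 0" using h0 by simp
  then have "u*D = -(v*Dh)" by (simp add: eq_neg_iff_add_eq_0)
  then have "u*D*Dinv = -(v*Dh)*Dinv" by simp
  then have hu: "u = -(v*Dh*Dinv)" using DDinv by (simp add: mult.assoc)
  have c: "u*X + w*q = - (v * Dinv * (Dh * X - D * h * q))" for X q
  proof -
    have "- (v * Dinv * (Dh * X - D * h * q)) = -(v*Dh*Dinv)*X + (D*Dinv)*(h*v)*q" by (simp add: algebra_simps)
    also have "\<dots> = u*X + w*q" by (simp add: DDinv hu hw)
    finally show ?thesis by simp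
  qed
  show ?thesis unfolding \<rho> delta_def smul3_def by (intro exI[of _ "-(v*Dinv)"]) (simp add: c)
qed

lemma deg_bound:
  assumes "homog_syz f r \<rho>" "\<rho> \<noteq> (0,0,0)" "\<rho> = smul3 v delta"
  shows "d - m \<le> r"
proof -
  obtain e1 e2 e3 where de: "delta = (e1,e2,e3)" by (cases delta) auto
  have he: "homog (d-m) e1" "homog (d-m) e2" "homog (d-m) e3" using delta_syz de by (auto simp: homog_syz_def)
  have \<rho>: "\<rho> = (v*e1, v*e2, v*e3)" using assms(3) de by (simp add: smul3_def)
  have hr: "homog r (v*e1)" "homog r (v*e2)" "homog r (v*e3)" using assms(1) \<rho> by (auto simp: homog_syz_def)
  consider "v*e1 \<noteq> 0" | "v*e2 \<noteq> 0" | "v*e3 \<noteq> 0" using assms(2) \<rho> by auto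
  then show ?thesis
  proof cases
    case 1 then show ?thesis using deg_ge[OF hr(1) refl he(1)] by simp
  next
    case 2 then show ?thesis using deg_ge[OF hr(2) refl he(2)] by simp
  next
    case 3 then show ?thesis using deg_ge[OF hr(3) refl he(3)] by simp
  qed
qed

end

context arrp
begin

lemma W_zero: "W (0,0,0) = 0" by (simp add: W_def Wp_def)

lemma free_part:
  assumes \<rho>: "homog_syz f (m - 1) \<rho>" "\<rho> \<noteq> (0,0,0)" and lt: "m - 1 < d - m"
  shows "free_with_exponents f (m - 1) (d - m)"
proof -
  have arr: "\<rho> \<in> AR f" using \<rho>(1) by (simp add: homog_syz_def)
  have hW: "homog m (W \<rho>)" using homog_W[OF \<rho>(1)] m_ge by simp
  obtain lam where lam: "W \<rho> = g * lam" using tangent_g[OF arr] by (rule dvdE)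
  have "W \<rho> = lam * g" using lam by (simp add: mult.commute)
  then obtain c where c: "lam = const c" using quot_const[OF _ hW homog_g g0] by blast
  have c0: "c \<noteq> 0"
  proof
    assume "c = 0"
    then have "W \<rho> = 0" using lam c by simp
    then obtain v where "\<rho> = smul3 v delta" using key[OF arr] by blast
    then have "d - m \<le> m - 1" using deg_bound[OF \<rho>] by blast
    then show False using lt by simp
  qed
  have Wr: "W \<rho> = const c * g" using lam c by (simp add: mult.commute)
  have gen: "\<exists>g1 g2. s = add3 (smul3 g1 \<rho>) (smul3 g2 delta)" if s: "s \<in> AR f" for s
  proof -
    obtain mu where mu: "W s = g * mu" using tangent_g[OF s] by (rule dvdE)
    define k where "k = mu * const (1/c)"
    define s' where "s' = add3 (smul3 1 s) (smul3 (-k) \<rho>)"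
    have s'AR: "s' \<in> AR f" unfolding s'_def by (rule AR_comb[OF s arr])
    have "W s' = W s - k * W \<rho>" unfolding s'_def W_def by (simp add: Wp_add3 Wp_smul3)
    also have "\<dots> = g * mu - mu * (const c * const (1/c)) * g" unfolding mu Wr k_def by (simp add: algebra_simps)
    also have "\<dots> = 0" using const_inv[OF c0] by simp
    finally obtain v where v: "s' = smul3 v delta" using key[OF s'AR] by blast
    obtain a b cc where sabc: "s = (a,b,cc)" by (cases s) auto
    obtain r1 r2 r3 where rr: "\<rho> = (r1,r2,r3)" by (cases \<rho>) auto
    obtain e1 e2 e3 where de: "delta = (e1,e2,e3)" by (cases delta) auto
    have "a - k*r1 = v*e1" "b - k*r2 = v*e2" "cc - k*r3 = v*e3"
      using v unfolding s'_def sabc rr de add3_def smul3_def by auto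
    then have "s = add3 (smul3 k \<rho>) (smul3 v delta)"
      unfolding sabc rr de add3_def smul3_def by (simp add: algebra_simps)
    then show ?thesis by blast
  qed
  have ind: "g1 = 0 \<and> g2 = 0" if z: "add3 (smul3 g1 \<rho>) (smul3 g2 delta) = (0,0,0)" for g1 g2
  proof -
    have "g1 * W \<rho> + g2 * W delta = 0"
      using arg_cong[OF z, of W] unfolding W_def by (simp add: Wp_add3 Wp_smul3 W_zero[unfolded W_def])
    then have "g1 * (const c * g) = 0" using W_delta Wr by simp
    then have g1: "g1 = 0" using c0 g0 by simp
    obtain e1 e2 e3 where de: "delta = (e1,e2,e3)" by (cases delta) auto
    have "g2 * e1 = 0" "g2 * e2 = 0" "g2 * e3 = 0"
      using z g1 unfolding de add3_def smul3_def by (cases \<rho>; simp)+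
    moreover have "e1 \<noteq> 0 \<or> e2 \<noteq> 0 \<or> e3 \<noteq> 0" using delta_nz de by auto
    ultimately have "g2 = 0" by auto
    then show ?thesis using g1 by simp
  qed
  show ?thesis unfolding free_with_exponents_def
    using lt \<rho>(1) delta_syz gen ind by (intro conjI exI[of _ \<rho>] exI[of _ delta]) auto
qed

theorem main:
  "mdr f = d - m \<or>
    (mdr f + 1 \<le> d - m \<and>
      ((mdr f + 1 \<le> m \<and> mdr f = m - 1 \<and> 2 * m < d + 1 \<and>
          free_with_exponents f (m - 1) (d - m))
       \<or> (m \<le> mdr f \<and> mdr f + 1 \<le> d - m \<and> 2 * m < d)))"
proof -
  let ?P = "\<lambda>r. \<exists>s. homog_syz f r s \<and> s \<noteq> (0,0,0)"
  have Pd: "?P (d - m)" using delta_syz delta_nz by blast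
  have le: "mdr f \<le> d - m" unfolding mdr_def by (rule Least_le[where P="?P", OF Pd])
  have "?P (mdr f)" unfolding mdr_def by (rule LeastI[where P="?P", OF Pd])
  then obtain \<rho> where \<rho>: "homog_syz f (mdr f) \<rho>" "\<rho> \<noteq> (0,0,0)" by blast
  have arr: "\<rho> \<in> AR f" using \<rho>(1) by (simp add: homog_syz_def)
  show ?thesis
  proof (cases "mdr f = d - m")
    case True then show ?thesis by simp
  next
    case False
    then have lt: "mdr f < d - m" using le by simp
    have ge: "m - 1 \<le> mdr f"
    proof (rule ccontr)
      assume "\<not> m - 1 \<le> mdr f"
      then have small: "mdr f + 1 < m" by simp
      have hW: "homog (mdr f + 1) (W \<rho>)" by (rule homog_W[OF \<rho>(1)])
      obtain mu where mu: "W \<rho> = g * mu" using tangent_g[OF arr] by (rule dvdE)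
      have "lowdeg (m + 0) (g * mu)" by (rule lowdeg_mult[OF homog_lowdeg[OF homog_g] lowdeg_0])
      then have "lowdeg m (W \<rho>)" using mu by simp
      then have "W \<rho> = 0" using homog_lowdeg_zero[OF hW _ small] by simp
      then obtain v where "\<rho> = smul3 v delta" using key[OF arr] by blast
      then have "d - m \<le> mdr f" using deg_bound[OF \<rho>] by blast
      then show False using lt by simp
    qed
    show ?thesis
    proof (cases "m \<le> mdr f")
      case True
      then show ?thesis using lt by simp
    next
      case False
      then have e: "mdr f = m - 1" using ge by simp
      have "free_with_exponents f (m - 1) (d - m)"
        using free_part[OF \<rho>[unfolded e]] lt e by simp
      moreover have "m \<le> d - m \<and> 2 * m < d + 1" using lt e m_ge by arith
      moreover have "Suc (m - Suc 0) = m" using m_ge by simp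
      ultimately show ?thesis using e by simp
    qed
  qed
qed

end

theorem theorem1p2:
  fixes L :: "(complex \<times> complex \<times> complex) list" and p :: "complex \<times> complex \<times> complex"
    and d m :: nat
  assumes "line_arrangement L"
    and "d = length L"
    and "intersection_point L p"
    and "m = mult_pt L p"
  shows "mdr (arr_poly L) = d - m \<or>
    (mdr (arr_poly L) + 1 \<le> d - m \<and>
      ((mdr (arr_poly L) + 1 \<le> m \<and> mdr (arr_poly L) = m - 1 \<and> 2 * m < d + 1 \<and>
          free_with_exponents (arr_poly L) (m - 1) (d - m))
       \<or> (m \<le> mdr (arr_poly L) \<and> mdr (arr_poly L) + 1 \<le> d - m \<and> 2 * m < d)))"
proof -
  obtain p1 p2 p3 where p: "p = (p1,p2,p3)" by (cases p) auto
  have mm: "mult_pt L p = length (filter (on_line p) L)"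
    unfolding mult_pt_def by (simp add: length_filter_conv_card)
  interpret A: arrp L p1 p2 p3
    using assms(1,3) p mm by unfold_locales (auto simp: intersection_point_def)
  have "A.f = arr_poly L" "A.d = d" "A.m = m"
    using assms(2,4) mm p by (simp_all add: A.f_def A.d_def A.m_def A.LP_def)
  then show ?thesis using A.main by simp
qed

end
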